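(* Let $k\ge2$, $n\ge k$, $\beta=\sum_{i=1}^n i^{k-1}$ and $c_i=i^{k-1}/\beta$ for $i=1,\dots,n$. In the position-randomized auction setting described in the context, if the $k-1$ disadvantaged bidders all use the initial bid sequence $c_1,\dots,c_n$ and the uniform distribution on permutations, then for every position-randomized strategy of the adversary ${\mathcal A}$, the expected number of objects ${\mathcal A}$ wins is at most $\frac{\beta-1}{n^{k-1}}$.
   Context: Auction model: there are $k$ bidders, one adversary ${\mathcal A}$ and $k-1$ disadvantaged bidders, and $n$ objects auctioned simultaneously. Each object is won by the highest bidder on it; if $m$ bidders tie for the highest bid, each wins with probability $1/m$. A position-randomized bidding algorithm: a bidder chooses an initial sequence $x_1,\dots,x_n$ of positive reals with $\sum x_j\le 1$ (budget) and a probability distribution on permutations $\sigma$ of $\{1,\dots,n\}$; he draws $\sigma$ and bids $x_j$ on object $\sigma(j)$. The disadvantaged bidders draw their permutations independently of each other, and ${\mathcal A}$'s permutation is drawn independently of theirs. *)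

theory Defs
  imports "HOL-Probability.Probability" "HOL-Combinatorics.Permutations"
begin

text \<open>Objects are 1..n; disadvantaged bidders are indexed 1..k-1.\<close>

definition perms :: "nat \<Rightarrow> (nat \<Rightarrow> nat) set" where
  "perms n = {\<sigma>. \<sigma> permutes {1..n}}"

text \<open>Bid placed on object j by a bidder with initial sequence x and permutation sigma
  (who bids x i on object sigma i).\<close>
definition bid_on :: "(nat \<Rightarrow> real) \<Rightarrow> (nat \<Rightarrow> nat) \<Rightarrow> nat \<Rightarrow> real" where
  "bid_on x \<sigma> j = x (inv \<sigma> j)"

text \<open>Probability that the adversary (bid a) wins an object against the bids b i,
  i in 1..k-1, of the disadvantaged bidders, with uniform tie-breaking.\<close>
definition adv_share :: "nat \<Rightarrow> real \<Rightarrow> (nat \<Rightarrow> real) \<Rightarrow> real" where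
  "adv_share k a b =
     (if \<forall>i\<in>{1..k-1}. b i \<le> a then 1 / real (1 + card {i\<in>{1..k-1}. b i = a}) else 0)"

definition adv_wins :: "nat \<Rightarrow> nat \<Rightarrow> (nat \<Rightarrow> real) \<Rightarrow> (nat \<Rightarrow> real)
     \<Rightarrow> (nat \<Rightarrow> nat) \<Rightarrow> (nat \<Rightarrow> nat \<Rightarrow> nat) \<Rightarrow> real" where
  "adv_wins k n x c \<tau> \<sigma>s = (\<Sum>j\<in>{1..n}. adv_share k (bid_on x \<tau> j) (\<lambda>i. bid_on c (\<sigma>s i) j))"

definition disadv_perms :: "nat \<Rightarrow> nat \<Rightarrow> (nat \<Rightarrow> nat \<Rightarrow> nat) pmf" where
  "disadv_perms k n = pmf_of_set (PiE {1..k-1} (\<lambda>_. perms n))"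

definition expected_adv_wins :: "nat \<Rightarrow> nat \<Rightarrow> (nat \<Rightarrow> real) \<Rightarrow> (nat \<Rightarrow> nat) pmf
     \<Rightarrow> (nat \<Rightarrow> real) \<Rightarrow> real" where
  "expected_adv_wins k n x q c =
     measure_pmf.expectation (pair_pmf q (disadv_perms k n))
       (\<lambda>(\<tau>, \<sigma>s). adv_wins k n x c \<tau> \<sigma>s)"

end

theory Submission
  imports Defs
begin


lemma card_perm_map:
  assumes "finite S" "a \<in> S" "b \<in> S"
  shows "card {p. p permutes S \<and> p a = b} = fact (card S - 1)"
proof -
  have 1: "{p. p permutes S \<and> p a = a} = {p. p permutes (S - {a})}"
  proof (intro set_eqI iffI)
    fix p assume "p \<in> {p. p permutes S \<and> p a = a}"
    then show "p \<in> {p. p permutes (S - {a})}"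
      using permutes_superset[of p S "S - {a}"] by auto
  next
    fix p assume "p \<in> {p. p permutes (S - {a})}"
    then show "p \<in> {p. p permutes S \<and> p a = a}"
      using permutes_subset[of p "S - {a}" S] permutes_not_in[of p "S - {a}" a] by auto
  qed
  have 2: "bij_betw (\<lambda>p. Transposition.transpose a b \<circ> p) {p. p permutes S \<and> p a = b} {p. p permutes S \<and> p a = a}"
    by (rule bij_betw_byWitness[where f' = "\<lambda>p. Transposition.transpose a b \<circ> p"])
       (auto simp: comp_assoc[symmetric] assms permutes_in_image intro!: permutes_compose permutes_swap_id)
  have "card {p. p permutes S \<and> p a = b} = card {p. p permutes (S - {a})}"
    using bij_betw_same_card[OF 2] 1 by simp
  also have "\<dots> = fact (card S - 1)"
    using card_permutations[of "S - {a}" "card S - 1"] assms by simp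
  finally show ?thesis .
qed

lemma card_perm_inv_in:
  assumes "finite S" "j \<in> S" "L \<subseteq> S"
  shows "card {p. p permutes S \<and> inv p j \<in> L} = card L * fact (card S - 1)"
proof -
  have eq: "{p. p permutes S \<and> inv p j \<in> L} = (\<Union>l\<in>L. {p. p permutes S \<and> p l = j})"
    by (auto simp: permutes_inverses; metis permutes_inverses(1))
  have fin: "finite L" using assms finite_subset by blast
  have "card (\<Union>l\<in>L. {p. p permutes S \<and> p l = j}) = (\<Sum>l\<in>L. card {p. p permutes S \<and> p l = j})"
    by (rule card_UN_disjoint) (auto simp: fin assms finite_permutations dest: permutes_inj injD)
  also have "\<dots> = (\<Sum>l\<in>L. fact (card S - 1))"
    by (intro sum.cong refl card_perm_map) (use assms in auto)
  finally show ?thesis using eq by simp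
qed



lemma prod_ind: "finite I \<Longrightarrow> (\<Prod>i\<in>I. if P i then 1 else (0::real)) = (if \<forall>i\<in>I. P i then 1 else 0)"
  by (cases "\<forall>i\<in>I. P i") (auto intro: prod_zero)

lemma share_bound:
  "adv_share k a b \<le> (1/2) * ((\<Prod>i\<in>{1..k-1}. if b i \<le> a then 1 else 0)
      + (\<Prod>i\<in>{1..k-1}. if b i < a then 1 else 0))"
proof (cases "\<forall>i\<in>{1..k-1}. b i \<le> a")
  case True
  show ?thesis
  proof (cases "\<forall>i\<in>{1..k-1}. b i < a")
    case True2: True
    then have "{i\<in>{1..k-1}. b i = a} = {}" by force
    then show ?thesis using True True2 by (simp add: adv_share_def prod_ind)
  next
    case False
    then obtain i where "i \<in> {i\<in>{1..k-1}. b i = a}" using True by force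
    then have "{i\<in>{1..k-1}. b i = a} \<noteq> {}" by blast
    then have "card {i\<in>{1..k-1}. b i = a} > 0" by (simp add: card_gt_0_iff)
    then have "card {i\<in>{1..k-1}. b i = a} \<ge> 1" by simp
    then have h1: "1 / real (1 + card {i\<in>{1..k-1}. b i = a}) \<le> 1/2"
      by (simp add: field_simps)
    have h2: "(\<Prod>i\<in>{1..k-1}. if b i < a then 1 else (0::real)) = 0"
      using False by (simp add: prod_ind)
    have h3: "(\<Prod>i\<in>{1..k-1}. if b i \<le> a then 1 else (0::real)) = 1"
      using True by (simp add: prod_ind)
    have h4: "adv_share k a b = 1 / real (1 + card {i\<in>{1..k-1}. b i = a})"
      using True by (simp add: adv_share_def)
    show ?thesis unfolding h2 h3 h4 using h1 by simp
  qed
next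
  case False
  then have "\<not> (\<forall>i\<in>{1..k-1}. b i < a)" by force
  then have g1: "(\<Prod>i\<in>{1..k-1}. if b i < a then 1 else (0::real)) = 0"
    by (simp only: prod_ind finite_atLeastAtMost if_False)
  have g2: "(\<Prod>i\<in>{1..k-1}. if b i \<le> a then 1 else (0::real)) = 0"
    using False by (simp only: prod_ind finite_atLeastAtMost if_False)
  have g3: "adv_share k a b = 0" using False by (simp add: adv_share_def)
  show ?thesis unfolding g1 g2 g3 by simp
qed

lemma sum_ind_card: "finite A \<Longrightarrow> (\<Sum>x\<in>A. if P x then 1 else (0::real)) = real (card {x\<in>A. P x})"
  by (simp add: sum.inter_filter[symmetric])

lemma obj_bound:
  assumes "n \<ge> 1" "j \<in> {1..n}"
  shows "(\<Sum>s\<in>PiE {1..k-1} (\<lambda>_. perms n). adv_share k a (\<lambda>i. bid_on c (s i) j))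
           / real (card (PiE {1..k-1} (\<lambda>_. perms n)))
         \<le> (1/2) * ((real (card {l\<in>{1..n}. c l \<le> a}) / n) ^ (k-1)
                   + (real (card {l\<in>{1..n}. c l < a}) / n) ^ (k-1))"
proof -
  define S where "S = PiE {1..k-1} (\<lambda>_. perms n)"
  have finP: "finite (perms n)" unfolding perms_def by (simp add: finite_permutations)
  have finS: "finite S" unfolding S_def using finP by (simp add: finite_PiE)
  have cardP: "card (perms n) = fact n" unfolding perms_def by (rule card_permutations) auto
  have cardS: "card S = (fact n) ^ (k-1)" unfolding S_def by (simp add: card_PiE cardP)
  have cnt: "(\<Sum>s\<in>S. \<Prod>i\<in>{1..k-1}. if bid_on c (s i) j \<le> a then 1 else (0::real))
      = (real (card {l\<in>{1..n}. c l \<le> a}) * fact (n-1)) ^ (k-1)"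
    and cnt2: "(\<Sum>s\<in>S. \<Prod>i\<in>{1..k-1}. if bid_on c (s i) j < a then 1 else (0::real))
      = (real (card {l\<in>{1..n}. c l < a}) * fact (n-1)) ^ (k-1)"
  proof -
    have gen: "(\<Sum>s\<in>S. \<Prod>i\<in>{1..k-1}. if c (inv (s i) j) \<in> R then 1 else (0::real))
      = (real (card {l\<in>{1..n}. c l \<in> R}) * fact (n-1)) ^ (k-1)" for R
    proof -
      have "(\<Sum>s\<in>S. \<Prod>i\<in>{1..k-1}. if c (inv (s i) j) \<in> R then 1 else (0::real))
          = (\<Prod>i\<in>{1..k-1}. \<Sum>\<sigma>\<in>perms n. if c (inv \<sigma> j) \<in> R then 1 else (0::real))"
        unfolding S_def by (rule prod_sum_PiE[symmetric]) (auto simp: finP)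
      also have "\<dots> = (\<Sum>\<sigma>\<in>perms n. if c (inv \<sigma> j) \<in> R then 1 else (0::real)) ^ (k-1)"
        by simp
      also have "(\<Sum>\<sigma>\<in>perms n. if c (inv \<sigma> j) \<in> R then 1 else (0::real))
           = real (card {\<sigma>\<in>perms n. c (inv \<sigma> j) \<in> R})"
        by (rule sum_ind_card[OF finP])
      also have "{\<sigma>\<in>perms n. c (inv \<sigma> j) \<in> R} = {p. p permutes {1..n} \<and> inv p j \<in> {l\<in>{1..n}. c l \<in> R}}"
      proof -
        have "inv p j \<in> {1..n}" if "p permutes {1..n}" for p
          using permutes_in_image[OF permutes_inv[OF that]] assms(2) by blast
        then show ?thesis unfolding perms_def by blast
      qed
      also have "card \<dots> = card {l\<in>{1..n}. c l \<in> R} * fact (card {1..n} - 1)"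
        by (rule card_perm_inv_in) (use assms in auto)
      finally show ?thesis by simp
    qed
    show "(\<Sum>s\<in>S. \<Prod>i\<in>{1..k-1}. if bid_on c (s i) j \<le> a then 1 else (0::real))
      = (real (card {l\<in>{1..n}. c l \<le> a}) * fact (n-1)) ^ (k-1)"
      using gen[of "{..a}"] by (simp add: bid_on_def)
    show "(\<Sum>s\<in>S. \<Prod>i\<in>{1..k-1}. if bid_on c (s i) j < a then 1 else (0::real))
      = (real (card {l\<in>{1..n}. c l < a}) * fact (n-1)) ^ (k-1)"
      using gen[of "{..<a}"] by (simp add: bid_on_def)
  qed
  have "(\<Sum>s\<in>S. adv_share k a (\<lambda>i. bid_on c (s i) j))
     \<le> (\<Sum>s\<in>S. (1/2) * ((\<Prod>i\<in>{1..k-1}. if bid_on c (s i) j \<le> a then 1 else 0)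
      + (\<Prod>i\<in>{1..k-1}. if bid_on c (s i) j < a then 1 else 0)))"
    by (rule sum_mono) (rule share_bound)
  also have "\<dots> = (1/2) * ((real (card {l\<in>{1..n}. c l \<le> a}) * fact (n-1)) ^ (k-1)
      + (real (card {l\<in>{1..n}. c l < a}) * fact (n-1)) ^ (k-1))"
    by (simp only: sum_distrib_left[symmetric] sum.distrib cnt cnt2)
  finally have 1: "(\<Sum>s\<in>S. adv_share k a (\<lambda>i. bid_on c (s i) j)) \<le> \<dots>" .
  have fn: "(fact n :: real) = real n * fact (n-1)"
    by (rule fact_reduce) (use assms(1) in simp)
  have pos: "(0::real) < fact n" by simp
  have "(\<Sum>s\<in>S. adv_share k a (\<lambda>i. bid_on c (s i) j)) / real (card S)
     \<le> (1/2) * ((real (card {l\<in>{1..n}. c l \<le> a}) * fact (n-1)) ^ (k-1)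
      + (real (card {l\<in>{1..n}. c l < a}) * fact (n-1)) ^ (k-1)) / (fact n) ^ (k-1)"
    using divide_right_mono[OF 1, of "real (card S)"] unfolding cardS of_nat_power of_nat_fact by simp
  also have "\<dots> = (1/2) * ((real (card {l\<in>{1..n}. c l \<le> a}) / n) ^ (k-1)
                   + (real (card {l\<in>{1..n}. c l < a}) / n) ^ (k-1))"
  proof -
    have np: "real n > 0" using assms(1) by simp
    have eqL: "(real L * fact (n-1)) ^ (k-1) / (fact n) ^ (k-1) = (real L / n) ^ (k-1)" for L
    proof -
      have "(real L * fact (n-1)) ^ (k-1) / (fact n) ^ (k-1) = ((real L * fact (n-1)) / fact n) ^ (k-1)"
        by (simp add: power_divide)
      also have "(real L * fact (n-1)) / fact n = real L / n"
        using np by (simp add: fn)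
      finally show ?thesis .
    qed
    have g: "\<And>X Y Z::real. (1/2)*(X+Y)/Z = (1/2)*(X/Z+Y/Z)" by (simp add: add_divide_distrib)
    show ?thesis by (simp only: g eqL)
  qed
  finally show ?thesis unfolding S_def .
qed



lemma card_le_some:
  assumes "finite T" "T \<noteq> {}" "\<forall>l\<in>T. (1::nat) \<le> l"
  shows "\<exists>l\<in>T. card T \<le> l"
proof -
  have "Max T \<in> T" using assms by simp
  moreover have "T \<subseteq> {1..Max T}" using assms by auto
  then have "card T \<le> Max T" using card_mono[of "{1..Max T}" T] by simp
  ultimately show ?thesis by blast
qed

lemma pow_card_le:
  fixes m n :: nat and \<beta> a :: real
  assumes "m \<ge> 1" "\<beta> > 0" "a > 0" "T \<subseteq> {1..n}" "\<forall>l\<in>T. real l ^ m \<le> \<beta> * a"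
  shows "real (card T) ^ m \<le> \<beta> * a"
proof (cases "T = {}")
  case True then show ?thesis using assms by (simp add: zero_power)
next
  case False
  have "finite T" using assms finite_subset by blast
  then obtain l where l: "l \<in> T" "card T \<le> l" using card_le_some[OF _ False] assms(4) by force
  have "real (card T) ^ m \<le> real l ^ m" using l by (simp add: power_mono)
  also have "\<dots> \<le> \<beta> * a" using assms l by blast
  finally show ?thesis .
qed

lemma pow_card_less:
  fixes m n :: nat and \<beta> a :: real
  assumes "m \<ge> 1" "\<beta> > 0" "a > 0" "T \<subseteq> {1..n}" "\<forall>l\<in>T. real l ^ m < \<beta> * a"
  shows "real (card T) ^ m < \<beta> * a"
proof (cases "T = {}")
  case True then show ?thesis using assms by (simp add: zero_power)
next
  case False
  have "finite T" using assms finite_subset by blast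
  then obtain l where l: "l \<in> T" "card T \<le> l" using card_le_some[OF _ False] assms(4) by force
  have "real (card T) ^ m \<le> real l ^ m" using l by (simp add: power_mono)
  also have "\<dots> < \<beta> * a" using assms l by blast
  finally show ?thesis .
qed

lemma final_arith:
  fixes k n :: nat and \<beta> :: real and c x :: "nat \<Rightarrow> real"
  assumes "k \<ge> 2" and "n \<ge> k"
    and "\<beta> = (\<Sum>i=1..n. real i ^ (k - 1))"
    and "\<And>i. i \<in> {1..n} \<Longrightarrow> c i = real i ^ (k - 1) / \<beta>"
    and "\<And>j. j \<in> {1..n} \<Longrightarrow> x j > 0"
    and "(\<Sum>j=1..n. x j) \<le> 1"
  shows "(\<Sum>j=1..n. (1/2) * ((real (card {l\<in>{1..n}. c l \<le> x j}) / n) ^ (k-1)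
                   + (real (card {l\<in>{1..n}. c l < x j}) / n) ^ (k-1)))
         \<le> (\<beta> - 1) / real n ^ (k - 1)"
proof -
  define m where "m = k - 1"
  have m1: "m \<ge> 1" using assms(1) unfolding m_def by simp
  define B where "B = (\<Sum>i=1..n. i ^ m)"
  have bB: "\<beta> = real B" unfolding B_def assms(3) m_def by simp
  have B1: "B \<ge> 1"
  proof -
    have "1 ^ m \<le> B" unfolding B_def
      by (rule member_le_sum) (use assms(1,2) in auto)
    then show ?thesis by simp
  qed
  have bpos: "\<beta> > 0" using bB B1 by simp
  define le where "le j = card {l\<in>{1..n}. c l \<le> x j}" for j
  define lt where "lt j = card {l\<in>{1..n}. c l < x j}" for j
  have cle: "c l \<le> a \<longleftrightarrow> real l ^ m \<le> \<beta> * a" if "l \<in> {1..n}" for l a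
    using assms(4)[OF that] bpos unfolding m_def by (simp add: pos_divide_le_eq mult.commute)
  have clt: "c l < a \<longleftrightarrow> real l ^ m < \<beta> * a" if "l \<in> {1..n}" for l a
    using assms(4)[OF that] bpos unfolding m_def by (simp add: pos_divide_less_eq mult.commute)
  have A_le: "real (le j) ^ m \<le> \<beta> * x j" if "j \<in> {1..n}" for j
    unfolding le_def by (rule pow_card_le[OF m1 bpos assms(5)[OF that], of _ n]) (auto simp: cle)
  have A_lt: "real (le j) ^ m < \<beta> * x j" if "j \<in> {1..n}" "lt j = le j" for j
  proof -
    have fin: "finite {l\<in>{1..n}. c l \<le> x j}" by simp
    have "{l\<in>{1..n}. c l < x j} = {l\<in>{1..n}. c l \<le> x j}"
      using card_subset_eq[OF fin, of "{l\<in>{1..n}. c l < x j}"] that(2) unfolding le_def lt_def by force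
    then have "le j = card {l\<in>{1..n}. c l < x j}" unfolding le_def by simp
    then show ?thesis
      by (simp only:) (rule pow_card_less[OF m1 bpos assms(5)[OF that(1)], of _ n], auto simp: clt)
  qed
  have ltle: "lt j \<le> le j" for j
    unfolding lt_def le_def by (rule card_mono) auto
  have sumA: "(\<Sum>j=1..n. real (le j) ^ m) \<le> \<beta>"
  proof -
    have "(\<Sum>j=1..n. real (le j) ^ m) \<le> (\<Sum>j=1..n. \<beta> * x j)"
      by (rule sum_mono) (use A_le in auto)
    also have "\<dots> = \<beta> * (\<Sum>j=1..n. x j)" by (simp add: sum_distrib_left)
    also have "\<dots> \<le> \<beta>" using assms(6) bpos by simp
    finally show ?thesis .
  qed
  define NA where "NA = (\<Sum>j=1..n. le j ^ m)"
  have NAr: "real NA = (\<Sum>j=1..n. real (le j) ^ m)" unfolding NA_def by simp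
  have NAB: "NA \<le> B" using sumA NAr bB by simp
  have key: "(\<Sum>j=1..n. (1/2) * (real (le j) ^ m + real (lt j) ^ m)) \<le> \<beta> - 1"
  proof (cases "NA < B")
    case True
    then have "real NA \<le> \<beta> - 1" using bB by simp
    moreover have "(\<Sum>j=1..n. (1/2) * (real (le j) ^ m + real (lt j) ^ m)) \<le> (\<Sum>j=1..n. real (le j) ^ m)"
    proof (rule sum_mono)
      fix j
      have "real (lt j) ^ m \<le> real (le j) ^ m" using ltle[of j] by (simp add: power_mono)
      then show "(1/2) * (real (le j) ^ m + real (lt j) ^ m) \<le> real (le j) ^ m" by simp
    qed
    ultimately show ?thesis using NAr by simp
  next
    case False
    then have eq: "real NA = \<beta>" using NAB bB by simp
    have strict: "lt j < le j" if "j \<in> {1..n}" for j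
    proof (rule ccontr)
      assume "\<not> lt j < le j"
      then have "lt j = le j" using ltle[of j] by simp
      then have s: "real (le j) ^ m < \<beta> * x j" using A_lt that by blast
      have "(\<Sum>j=1..n. real (le j) ^ m) < (\<Sum>j=1..n. \<beta> * x j)"
        by (rule sum_strict_mono_ex1) (use A_le s that in auto)
      also have "\<dots> = \<beta> * (\<Sum>j=1..n. x j)" by (simp add: sum_distrib_left)
      also have "\<dots> \<le> \<beta>" using assms(6) bpos by simp
      finally show False using eq NAr by simp
    qed
    have each: "(1/2) * (real (le j) ^ m + real (lt j) ^ m) \<le> real (le j) ^ m - 1/2" if "j \<in> {1..n}" for j
    proof -
      have "lt j \<le> le j - 1" "le j \<ge> 1" using strict[OF that] by auto
      then have "lt j ^ m \<le> (le j - 1) ^ m" by (simp add: power_mono)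
      also have "(le j - 1) ^ m < le j ^ m" using \<open>le j \<ge> 1\<close> m1
        by (intro power_strict_mono) auto
      finally have "lt j ^ m + 1 \<le> le j ^ m" by simp
      then have "real (lt j ^ m + 1) \<le> real (le j ^ m)"
        by (simp only: of_nat_le_iff)
      then have "real (lt j) ^ m + 1 \<le> real (le j) ^ m"
        by simp
      then show ?thesis by simp
    qed
    have "(\<Sum>j=1..n. (1/2) * (real (le j) ^ m + real (lt j) ^ m)) \<le> (\<Sum>j=1..n. real (le j) ^ m - 1/2)"
      by (rule sum_mono) (use each in auto)
    also have "\<dots> = real NA - real n / 2" by (simp add: sum_subtractf NAr)
    also have "\<dots> \<le> \<beta> - 1" using eq assms(1,2) by simp
    finally show ?thesis .
  qed
  have npos: "real n ^ m > 0" using assms(1,2) by simp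
  have "(\<Sum>j=1..n. (1/2) * ((real (le j) / n) ^ m + (real (lt j) / n) ^ m))
      = (\<Sum>j=1..n. (1/2) * (real (le j) ^ m + real (lt j) ^ m)) / real n ^ m"
    by (simp add: sum_divide_distrib power_divide add_divide_distrib mult.commute)
  also have "\<dots> \<le> (\<beta> - 1) / real n ^ m"
    by (rule divide_right_mono[OF key]) (use npos in simp)
  finally show ?thesis unfolding le_def lt_def m_def .
qed



lemma per_tau:
  fixes k n :: nat and \<beta> :: real and c x :: "nat \<Rightarrow> real"
  assumes "k \<ge> 2" and "n \<ge> k"
    and "\<beta> = (\<Sum>i=1..n. real i ^ (k - 1))"
    and "\<And>i. i \<in> {1..n} \<Longrightarrow> c i = real i ^ (k - 1) / \<beta>"
    and "\<And>j. j \<in> {1..n} \<Longrightarrow> x j > 0"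
    and "(\<Sum>j=1..n. x j) \<le> 1"
    and tau: "\<tau> \<in> perms n"
  shows "(\<Sum>s\<in>PiE {1..k-1} (\<lambda>_. perms n). adv_wins k n x c \<tau> s)
           / real (card (PiE {1..k-1} (\<lambda>_. perms n))) \<le> (\<beta> - 1) / real n ^ (k - 1)"
proof -
  define S where "S = PiE {1..k-1} (\<lambda>_. perms n)"
  define h where "h a = (1/2) * ((real (card {l\<in>{1..n}. c l \<le> a}) / n) ^ (k-1)
                   + (real (card {l\<in>{1..n}. c l < a}) / n) ^ (k-1))" for a
  have n1: "n \<ge> 1" using assms(1,2) by simp
  have tp: "\<tau> permutes {1..n}" using tau unfolding perms_def by simp
  have "(\<Sum>s\<in>S. adv_wins k n x c \<tau> s) / real (card S)
      = (\<Sum>j=1..n. (\<Sum>s\<in>S. adv_share k (bid_on x \<tau> j) (\<lambda>i. bid_on c (s i) j)) / real (card S))"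
    unfolding adv_wins_def by (subst sum.swap) (simp add: sum_divide_distrib)
  also have "\<dots> \<le> (\<Sum>j=1..n. h (bid_on x \<tau> j))"
    by (rule sum_mono) (unfold S_def h_def, rule obj_bound[OF n1], simp)
  also have "\<dots> = (\<Sum>j=1..n. h (x (inv \<tau> j)))" unfolding bid_on_def ..
  also have "\<dots> = (\<Sum>j=1..n. h (x j))"
    by (rule sum.reindex_bij_betw[where h = "inv \<tau>" and g = "\<lambda>j. h (x j)"])
       (rule permutes_imp_bij[OF permutes_inv[OF tp]])
  also have "\<dots> \<le> (\<beta> - 1) / real n ^ (k - 1)"
    unfolding h_def by (rule final_arith[OF assms(1-6)])
  finally show ?thesis unfolding S_def .
qed

theorem lemma4p4:
  fixes k n :: nat and \<beta> :: real and c x :: "nat \<Rightarrow> real" and q :: "(nat \<Rightarrow> nat) pmf"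
  assumes "k \<ge> 2" and "n \<ge> k"
    and "\<beta> = (\<Sum>i=1..n. real i ^ (k - 1))"
    and "\<And>i. i \<in> {1..n} \<Longrightarrow> c i = real i ^ (k - 1) / \<beta>"
    and "\<And>j. j \<in> {1..n} \<Longrightarrow> x j > 0"
    and "(\<Sum>j=1..n. x j) \<le> 1"
    and "set_pmf q \<subseteq> perms n"
  shows "expected_adv_wins k n x q c \<le> (\<beta> - 1) / real n ^ (k - 1)"
proof -
  define S where "S = PiE {1..k-1} (\<lambda>_. perms n)"
  define M where "M = (\<beta> - 1) / real n ^ (k - 1)"
  have finP: "finite (perms n)" unfolding perms_def by (simp add: finite_permutations)
  have finS: "finite S" unfolding S_def using finP by (simp add: finite_PiE)
  have idP: "id \<in> perms n" unfolding perms_def by (simp add: permutes_id)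
  have neS: "S \<noteq> {}" unfolding S_def using idP by (auto simp: PiE_eq_empty_iff)
  have D: "disadv_perms k n = pmf_of_set S" unfolding disadv_perms_def S_def ..
  have pmfD: "pmf (disadv_perms k n) s = indicator S s / real (card S)" for s
    unfolding D using finS neS by simp
  have setD: "set_pmf (disadv_perms k n) = S" unfolding D using finS neS by simp
  let ?f = "\<lambda>(\<tau>, \<sigma>s). adv_wins k n x c \<tau> \<sigma>s"
  have "expected_adv_wins k n x q c = (\<Sum>p\<in>perms n \<times> S. ?f p * pmf (pair_pmf q (disadv_perms k n)) p)"
    unfolding expected_adv_wins_def
    by (rule integral_measure_pmf_real) (use finP finS assms(7) setD in auto)
  also have "\<dots> = (\<Sum>\<tau>\<in>perms n. \<Sum>s\<in>S. adv_wins k n x c \<tau> s * (pmf q \<tau> * (indicator S s / real (card S))))"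
  proof -
    have "(\<Sum>p\<in>perms n \<times> S. ?f p * pmf (pair_pmf q (disadv_perms k n)) p)
       = (\<Sum>(\<tau>, s)\<in>perms n \<times> S. adv_wins k n x c \<tau> s * (pmf q \<tau> * (indicator S s / real (card S))))"
      by (intro sum.cong refl) (auto simp: pmf_pair pmfD)
    then show ?thesis by (simp only: sum.cartesian_product)
  qed
  also have "\<dots> = (\<Sum>\<tau>\<in>perms n. pmf q \<tau> * ((\<Sum>s\<in>S. adv_wins k n x c \<tau> s) / real (card S)))"
    by (intro sum.cong refl) (simp add: sum_divide_distrib sum_distrib_left mult_ac)
  also have "\<dots> \<le> (\<Sum>\<tau>\<in>perms n. pmf q \<tau> * M)"
  proof (intro sum_mono mult_left_mono)
    fix \<tau> assume t: "\<tau> \<in> perms n"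
    show "(\<Sum>s\<in>S. adv_wins k n x c \<tau> s) / real (card S) \<le> M"
      using per_tau[OF assms(1-6) t] unfolding S_def M_def by simp
    show "0 \<le> pmf q \<tau>" by simp
  qed
  also have "\<dots> = M * (\<Sum>\<tau>\<in>perms n. pmf q \<tau>)" by (simp add: sum_distrib_left mult_ac)
  also have "\<dots> = M" using sum_pmf_eq_1[OF finP assms(7)] by simp
  finally show ?thesis unfolding M_def .
qed


end
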